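(* Let $X$ be a real Banach space which is an $L_1$-predual or an $M$-embedded space, and let $Y$ be a finite co-dimensional closed subspace of $X$. If $Y$ has property-$(HB)$ in $X$, then $Y^{\perp\perp}$ has property-$(HB)$ in $X^{**}$.
   Context: $X$ is an $L_1$-predual if $X^*$ is isometrically isomorphic to $L_1(\mu)$ for some measure $\mu$; $X$ is $M$-embedded if its canonical image is an $M$-ideal in $X^{**}$ (a closed subspace $J$ of $E$ is an $M$-ideal if $E^*=J^\perp\oplus W$ for a closed subspace $W$ with $\|u+w\|=\|u\|+\|w\|$ for $u\in J^\perp,w\in W$). $Y^\perp=\{x^*\in X^*:x^*|_Y=0\}$ and $Y^{\perp\perp}\subseteq X^{**}$ its annihilator. A closed subspace $V$ of $E$ has property-$(HB)$ in $E$ if there is a linear projection $P$ on $E^*$ with range $V^\perp$ and $\|P\|=1$ such that, writing $G=(I-P)(E^* )$, for every $e^*=v^\#+v^\perp$ with $v^\#\in G$, $0\neq v^\perp\in V^\perp$, one has $\|e^*\|>\|v^\#\|$ and $\|e^*\|\ge\|v^\perp\|$. *)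

theory Defs
  imports "HOL-Analysis.Analysis"
begin

definition annihilator :: "'e::real_normed_vector set \<Rightarrow> ('e \<Rightarrow>\<^sub>L real) set" where
  "annihilator V = {f. \<forall>v\<in>V. blinfun_apply f v = 0}"

definition biannihilator :: "'e::real_normed_vector set \<Rightarrow> (('e \<Rightarrow>\<^sub>L real) \<Rightarrow>\<^sub>L real) set" where
  "biannihilator V = annihilator (annihilator V)"

definition canonical_embedding :: "'e::real_normed_vector \<Rightarrow> (('e \<Rightarrow>\<^sub>L real) \<Rightarrow>\<^sub>L real)" where
  "canonical_embedding x = Blinfun (\<lambda>f. blinfun_apply f x)"

definition M_ideal :: "'e::real_normed_vector set \<Rightarrow> bool" where
  "M_ideal J \<longleftrightarrow> subspace J \<and> closed J \<and>
     (\<exists>W. subspace W \<and> closed W \<and>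
          annihilator J \<inter> W = {0} \<and>
          (\<forall>e. \<exists>u\<in>annihilator J. \<exists>w\<in>W. e = u + w) \<and>
          (\<forall>u\<in>annihilator J. \<forall>w\<in>W. norm (u + w) = norm u + norm w))"

definition M_embedded :: "'e::real_normed_vector itself \<Rightarrow> bool" where
  "M_embedded _ \<longleftrightarrow> M_ideal (range (canonical_embedding :: 'e \<Rightarrow> _))"

text \<open>X^* is isometrically isomorphic to L_1(M): a map T from X^* to integrable
functions, linear modulo a.e. equality, norm preserving (hence injective modulo a.e.)
and onto L_1(M) modulo a.e. equality.\<close>
definition L1_isometric :: "'m measure \<Rightarrow> 'e::real_normed_vector itself \<Rightarrow> bool" where
  "L1_isometric M _ \<longleftrightarrow> (\<exists>T :: ('e \<Rightarrow>\<^sub>L real) \<Rightarrow> 'm \<Rightarrow> real.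
      (\<forall>f. integrable M (T f)) \<and>
      (\<forall>f g a b. AE x in M. T (a *\<^sub>R f + b *\<^sub>R g) x = a * T f x + b * T g x) \<and>
      (\<forall>f. (\<integral>x. \<bar>T f x\<bar> \<partial>M) = norm f) \<and>
      (\<forall>h. integrable M h \<longrightarrow> (\<exists>f. AE x in M. T f x = h x)))"

definition property_HB :: "'e::real_normed_vector set \<Rightarrow> bool" where
  "property_HB V \<longleftrightarrow> subspace V \<and> closed V \<and>
     (\<exists>P :: ('e \<Rightarrow>\<^sub>L real) \<Rightarrow>\<^sub>L ('e \<Rightarrow>\<^sub>L real).
        (\<forall>f. blinfun_apply P (blinfun_apply P f) = blinfun_apply P f) \<and> range (blinfun_apply P) = annihilator V \<and> norm P = 1 \<and>
        (\<forall>g\<in>range (\<lambda>f. f - blinfun_apply P f). \<forall>v\<in>annihilator V. v \<noteq> 0 \<longrightarrow>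
            norm (g + v) > norm g \<and> norm (g + v) \<ge> norm v))"

end

theory Submission
  imports Defs
begin


lemma bl_ev: "bounded_linear (\<lambda>f::'a::real_normed_vector \<Rightarrow>\<^sub>L 'b::real_normed_vector. blinfun_apply f x)"
  by (rule bounded_bilinear.bounded_linear_left[OF bounded_bilinear_blinfun_apply])
lemma bl_compl: "bounded_linear (\<lambda>a. a o\<^sub>L (b::'c::real_normed_vector \<Rightarrow>\<^sub>L 'a::real_normed_vector))"
  by (rule bounded_bilinear.bounded_linear_left[OF bounded_bilinear_blinfun_compose])

lemma ce_apply[simp]: "blinfun_apply (canonical_embedding x) f = blinfun_apply f x"
  unfolding canonical_embedding_def by (simp add: bounded_linear_Blinfun_apply[OF bl_ev])

lemma norm_ce_le: "norm (canonical_embedding (x::'a::real_normed_vector)) \<le> norm x"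
proof (rule norm_blinfun_bound)
  fix f :: "'a \<Rightarrow>\<^sub>L real"
  show "norm (blinfun_apply (canonical_embedding x) f) \<le> norm x * norm f"
    using norm_blinfun[of f x] by (simp add: mult.commute)
qed simp

lemma bl_ce: "bounded_linear (canonical_embedding :: 'a::real_normed_vector \<Rightarrow> _)"
  by (rule bounded_linear_intro[where K=1])
     (auto intro!: blinfun_eqI simp: blinfun.bilinear_simps norm_ce_le)

lemma norm_dual_le_ce: "norm (\<phi>::'a::real_normed_vector \<Rightarrow>\<^sub>L real) \<le> norm (canonical_embedding \<phi>)"
proof (rule norm_blinfun_bound)
  fix x :: 'a
  have "norm (blinfun_apply \<phi> x) = norm (blinfun_apply (canonical_embedding \<phi>) (canonical_embedding x))"
    by simp
  also have "\<dots> \<le> norm (canonical_embedding \<phi>) * norm (canonical_embedding x)"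
    by (rule norm_blinfun)
  also have "\<dots> \<le> norm (canonical_embedding \<phi>) * norm x"
    by (rule mult_left_mono[OF norm_ce_le]) simp
  finally show "norm (blinfun_apply \<phi> x) \<le> norm (canonical_embedding \<phi>) * norm x" .
qed simp

lemma norm_ce_dual: "norm (canonical_embedding (\<phi>::'a::real_normed_vector \<Rightarrow>\<^sub>L real)) = norm \<phi>"
  using norm_dual_le_ce norm_ce_le by (metis antisym)

lemma ann_iff: "f \<in> annihilator V \<longleftrightarrow> (\<forall>v\<in>V. blinfun_apply f v = 0)"
  by (simp add: annihilator_def)

lemma subspace_ann: "subspace (annihilator V)"
  unfolding subspace_def annihilator_def by (simp add: blinfun.bilinear_simps)

lemma closed_ann: "closed (annihilator V)"
proof -
  have "annihilator V = (\<Inter>v\<in>V. {f. blinfun_apply f v = 0})"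
    by (auto simp: ann_iff)
  moreover have "closed {f::'a\<Rightarrow>\<^sub>L real. blinfun_apply f v = 0}" for v
    using bounded_linear.continuous_on[OF bl_ev[of v], of UNIV, OF continuous_on_id]
    by (intro closed_Collect_eq) (auto)
  ultimately show ?thesis by auto
qed

lemma norm_sup:
  fixes \<psi> :: "'b::real_normed_vector \<Rightarrow>\<^sub>L real"
  assumes "\<And>a. norm a \<le> 1 \<Longrightarrow> blinfun_apply \<psi> a \<le> c"
  shows "norm \<psi> \<le> c"
proof (rule norm_blinfun_bound)
  show c0: "0 \<le> c" using assms[of 0] by simp
  fix x :: 'b
  show "norm (blinfun_apply \<psi> x) \<le> c * norm x"
  proof (cases "x = 0")
    case True then show ?thesis by simp
  next
    case False
    define a where "a = x /\<^sub>R norm x"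
    have na: "norm a \<le> 1" "norm (-a) \<le> 1" using False by (auto simp: a_def)
    have xa: "x = norm x *\<^sub>R a" using False by (simp add: a_def)
    have "\<bar>blinfun_apply \<psi> a\<bar> \<le> c" using assms[OF na(1)] assms[OF na(2)]
      by (auto simp: blinfun.bilinear_simps)
    then have "\<bar>blinfun_apply \<psi> x\<bar> \<le> c * norm x"
      by (subst xa) (simp add: blinfun.bilinear_simps abs_mult, metis mult.commute mult_left_mono norm_ge_zero)
    then show ?thesis by simp
  qed
qed

lemma HB_bidual_L:
  fixes Y :: "'a::real_normed_vector set" and P :: "('a \<Rightarrow>\<^sub>L real) \<Rightarrow>\<^sub>L ('a \<Rightarrow>\<^sub>L real)"
  assumes idem: "\<And>f. P (P f) = P f" and rng: "range (blinfun_apply P) = annihilator Y"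
    and nP: "norm P = 1" and Lp: "\<And>f. norm f = norm (P f) + norm (f - P f)"
  shows "property_HB (biannihilator Y)"
proof -
  define Pst where "Pst = Blinfun (\<lambda>z::('a\<Rightarrow>\<^sub>L real)\<Rightarrow>\<^sub>L real. z o\<^sub>L P)"
  have Pst: "blinfun_apply Pst z = z o\<^sub>L P" for z
    unfolding Pst_def by (simp add: bounded_linear_Blinfun_apply[OF bl_compl])
  define Q where "Q = Blinfun (\<lambda>\<Phi>::(('a\<Rightarrow>\<^sub>L real)\<Rightarrow>\<^sub>L real)\<Rightarrow>\<^sub>L real. \<Phi> o\<^sub>L Pst)"
  have Qap: "blinfun_apply (blinfun_apply Q \<Phi>) z = blinfun_apply \<Phi> (z o\<^sub>L P)" for \<Phi> z
    unfolding Q_def by (simp add: bounded_linear_Blinfun_apply[OF bl_compl] Pst)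
  let ?Z = "biannihilator Y"
  have PinY: "P f \<in> annihilator Y" for f using rng by auto
  have fixY: "v \<in> annihilator Y \<Longrightarrow> P v = v" for v using rng idem by (metis imageE)
  have Zi: "z \<in> ?Z \<longleftrightarrow> (\<forall>v\<in>annihilator Y. blinfun_apply z v = 0)" for z
    by (simp add: biannihilator_def ann_iff)
  have zPP: "(z o\<^sub>L P) o\<^sub>L P = z o\<^sub>L P" for z :: "('a\<Rightarrow>\<^sub>L real)\<Rightarrow>\<^sub>L real"
    by (rule blinfun_eqI) (simp add: idem)
  have Qidem: "Q (Q \<Phi>) = Q \<Phi>" for \<Phi>
    by (rule blinfun_eqI) (simp add: Qap zPP)
  have rngQ: "range (blinfun_apply Q) = annihilator ?Z"
  proof (intro set_eqI iffI)
    fix \<Psi> assume "\<Psi> \<in> range (blinfun_apply Q)"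
    then obtain \<Phi> where \<Psi>: "\<Psi> = Q \<Phi>" by auto
    show "\<Psi> \<in> annihilator ?Z"
    proof (unfold ann_iff, intro ballI)
      fix z assume "z \<in> ?Z"
      then have "z o\<^sub>L P = 0" using PinY Zi by (intro blinfun_eqI) simp
      then show "blinfun_apply \<Psi> z = 0" by (simp add: \<Psi> Qap)
    qed
  next
    fix \<Phi> assume \<Phi>: "\<Phi> \<in> annihilator ?Z"
    have "Q \<Phi> = \<Phi>"
    proof (rule blinfun_eqI)
      fix z
      have "z - (z o\<^sub>L P) \<in> ?Z" unfolding Zi
        by (auto simp: blinfun.bilinear_simps fixY)
      then have "blinfun_apply \<Phi> (z - (z o\<^sub>L P)) = 0" using \<Phi> by (simp add: ann_iff)
      then show "blinfun_apply (Q \<Phi>) z = blinfun_apply \<Phi> z"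
        by (simp add: Qap blinfun.diff_right)
    qed
    then show "\<Phi> \<in> range (blinfun_apply Q)" by (metis rangeI)
  qed
  have fixQ: "w \<in> annihilator ?Z \<Longrightarrow> Q w = w" for w
    using rngQ Qidem by (metis imageE)
  have nQle: "norm Q \<le> 1"
  proof (rule norm_blinfun_bound)
    fix \<Phi> :: "(('a\<Rightarrow>\<^sub>L real)\<Rightarrow>\<^sub>L real)\<Rightarrow>\<^sub>L real"
    show "norm (Q \<Phi>) \<le> 1 * norm \<Phi>"
    proof (simp, rule norm_blinfun_bound)
      fix z :: "('a\<Rightarrow>\<^sub>L real)\<Rightarrow>\<^sub>L real"
      have "norm (blinfun_apply \<Phi> (z o\<^sub>L P)) \<le> norm \<Phi> * norm (z o\<^sub>L P)" by (rule norm_blinfun)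
      also have "\<dots> \<le> norm \<Phi> * (norm z * norm P)"
        by (rule mult_left_mono[OF norm_blinfun_compose]) simp
      finally show "norm (blinfun_apply (Q \<Phi>) z) \<le> norm \<Phi> * norm z" by (simp add: Qap nP)
    qed simp
  qed simp
  obtain f where pf: "P f \<noteq> 0"
  proof -
    have "P \<noteq> 0" using nP by auto
    then show ?thesis using that by (metis blinfun_eqI blinfun.zero_left)
  qed
  define \<Phi>0 where "\<Phi>0 = canonical_embedding (P f)"
  have \<Phi>0Z: "\<Phi>0 \<in> annihilator ?Z" using PinY[of f] by (simp add: \<Phi>0_def ann_iff Zi)
  have \<Phi>0nz: "norm \<Phi>0 > 0" using pf by (simp add: \<Phi>0_def norm_ce_dual)
  have "norm \<Phi>0 \<le> norm Q * norm \<Phi>0"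
    using norm_blinfun[of Q \<Phi>0] fixQ[OF \<Phi>0Z] by simp
  then have nQ: "norm Q = 1" using nQle \<Phi>0nz by (metis antisym mult_le_cancel_right1 not_le)
  have LQ: "norm \<Phi> = norm (Q \<Phi>) + norm (\<Phi> - Q \<Phi>)" for \<Phi>
  proof (rule antisym)
    show "norm \<Phi> \<le> norm (Q \<Phi>) + norm (\<Phi> - Q \<Phi>)"
      by (metis add.commute diff_add_cancel norm_triangle_ineq)
    have key: "blinfun_apply (Q \<Phi>) a + blinfun_apply (\<Phi> - Q \<Phi>) b \<le> norm \<Phi>"
      if a: "norm a \<le> 1" and b: "norm b \<le> 1" for a b
    proof -
      define z where "z = (a o\<^sub>L P) + (b o\<^sub>L (id_blinfun - P))"
      have nz: "norm z \<le> 1"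
      proof (rule norm_blinfun_bound)
        fix h
        have "norm (blinfun_apply z h) \<le> norm (blinfun_apply a (P h)) + norm (blinfun_apply b (h - P h))"
          by (simp add: z_def blinfun.bilinear_simps norm_triangle_ineq)
        also have "\<dots> \<le> norm a * norm (P h) + norm b * norm (h - P h)"
          by (intro add_mono norm_blinfun)
        also have "\<dots> \<le> 1 * norm (P h) + 1 * norm (h - P h)"
          by (intro add_mono mult_right_mono a b) auto
        also have "\<dots> = 1 * norm h" using Lp[of h] by simp
        finally show "norm (blinfun_apply z h) \<le> 1 * norm h" .
      qed simp
      have "b o\<^sub>L (id_blinfun - P) = b - (b o\<^sub>L P)"
        by (rule blinfun_eqI) (simp add: blinfun.bilinear_simps)
      then have "blinfun_apply \<Phi> z = blinfun_apply (Q \<Phi>) a + blinfun_apply (\<Phi> - Q \<Phi>) b"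
        by (simp add: z_def blinfun.bilinear_simps Qap)
      moreover have "blinfun_apply \<Phi> z \<le> norm \<Phi>"
        using norm_blinfun[of \<Phi> z] nz
        by (smt (verit, ccfv_SIG) mult_left_le norm_ge_zero real_norm_def)
      ultimately show ?thesis by simp
    qed
    have "blinfun_apply (\<Phi> - Q \<Phi>) b \<le> norm \<Phi> - norm (Q \<Phi>)" if b: "norm b \<le> 1" for b
    proof -
      have "norm (Q \<Phi>) \<le> norm \<Phi> - blinfun_apply (\<Phi> - Q \<Phi>) b"
        by (rule norm_sup) (use key b in fastforce)
      then show ?thesis by simp
    qed
    then have "norm (\<Phi> - Q \<Phi>) \<le> norm \<Phi> - norm (Q \<Phi>)" by (rule norm_sup)
    then show "norm (Q \<Phi>) + norm (\<Phi> - Q \<Phi>) \<le> norm \<Phi>" by simp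
  qed
  show ?thesis
    unfolding property_HB_def
  proof (intro conjI exI[of _ Q])
    show "subspace ?Z" "closed ?Z" unfolding biannihilator_def by (rule subspace_ann closed_ann)+
    show "\<forall>\<Phi>. Q (Q \<Phi>) = Q \<Phi>" using Qidem by blast
    show "range (blinfun_apply Q) = annihilator ?Z" by (rule rngQ)
    show "norm Q = 1" by (rule nQ)
    show "\<forall>g\<in>range (\<lambda>f. f - Q f). \<forall>v\<in>annihilator ?Z. v \<noteq> 0 \<longrightarrow>
            norm (g + v) > norm g \<and> norm (g + v) \<ge> norm v"
    proof (intro ballI impI)
      fix g v assume g: "g \<in> range (\<lambda>f. f - Q f)" and v: "v \<in> annihilator ?Z" and v0: "v \<noteq> 0"
      obtain \<Psi> where g\<Psi>: "g = \<Psi> - Q \<Psi>" using g by auto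
      have Qg: "Q g = 0" by (simp add: g\<Psi> blinfun.bilinear_simps Qidem)
      have Qv: "Q v = v" by (rule fixQ[OF v])
      have "norm (g + v) = norm v + norm g"
        using LQ[of "g + v"] by (simp add: blinfun.bilinear_simps Qg Qv)
      then show "norm (g + v) > norm g \<and> norm (g + v) \<ge> norm v" using v0 by simp
    qed
  qed
qed



locale L1rep =
  fixes M :: "'m measure" and T :: "'e::real_normed_vector \<Rightarrow> 'm \<Rightarrow> real"
  assumes int: "\<And>f. integrable M (T f)"
    and lin: "\<And>f g a b. AE x in M. T (a *\<^sub>R f + b *\<^sub>R g) x = a * T f x + b * T g x"
    and nrm: "\<And>f. (\<integral>x. \<bar>T f x\<bar> \<partial>M) = norm f"
    and srj: "\<And>h. integrable M h \<Longrightarrow> (\<exists>f. AE x in M. T f x = h x)"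
begin

lemma Tmeas[measurable]: "T f \<in> borel_measurable M"
  using int by (rule borel_measurable_integrable)

lemma T_add: "AE x in M. T (f + g) x = T f x + T g x"
  using lin[of 1 f 1 g] by simp
lemma T_diff: "AE x in M. T (f - g) x = T f x - T g x"
  using lin[of 1 f "-1" g] by simp
lemma T_zero: "AE x in M. T 0 x = 0"
  using lin[of 0 f 0 f] by simp

lemma normT: assumes "AE x in M. T h x = k x" "k \<in> borel_measurable M"
  shows "norm h = (\<integral>x. \<bar>k x\<bar> \<partial>M)"
proof -
  have "(\<integral>x. \<bar>T h x\<bar> \<partial>M) = (\<integral>x. \<bar>k x\<bar> \<partial>M)"
    by (rule integral_cong_AE) (use assms in auto)
  then show ?thesis using nrm by simp
qed

lemma T_eqI: assumes "AE x in M. T f x = T g x" shows "f = g"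
proof -
  have "AE x in M. T (f - g) x = 0" using T_diff[of f g] assms by eventually_elim simp
  then have "norm (f - g) = (\<integral>x. \<bar>0::real\<bar> \<partial>M)" by (intro normT) auto
  then show ?thesis by simp
qed

definition E :: "'m set \<Rightarrow> 'e \<Rightarrow> 'e" where
  "E B f = (SOME h. AE x in M. T h x = T f x * indicator B x)"

lemma E_AE: assumes "B \<in> sets M" shows "AE x in M. T (E B f) x = T f x * indicator B x"
proof -
  have "integrable M (\<lambda>x. T f x * indicator B x)"
    using assms int by (rule integrable_real_mult_indicator)
  from srj[OF this] show ?thesis unfolding E_def by (rule someI_ex)
qed

lemma norm_E: assumes "B \<in> sets M" shows "norm (E B f) = (\<integral>x. \<bar>T f x\<bar> * indicator B x \<partial>M)"
proof -
  have "norm (E B f) = (\<integral>x. \<bar>T f x * indicator B x\<bar> \<partial>M)"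
    by (rule normT[OF E_AE[OF assms]]) (use assms in measurable)
  also have "\<dots> = (\<integral>x. \<bar>T f x\<bar> * indicator B x \<partial>M)"
    by (rule Bochner_Integration.integral_cong) (auto split: split_indicator)
  finally show ?thesis .
qed

lemma E_add: assumes "B \<in> sets M" shows "E B (f + g) = E B f + E B g"
  by (rule T_eqI) (use E_AE[OF assms, of "f+g"] E_AE[OF assms, of f] E_AE[OF assms, of g]
      T_add[of f g] T_add[of "E B f" "E B g"] in \<open>eventually_elim, simp add: algebra_simps\<close>)

lemma E_diff: assumes "B \<in> sets M" shows "E B (f - g) = E B f - E B g"
  by (rule T_eqI) (use E_AE[OF assms, of "f-g"] E_AE[OF assms, of f] E_AE[OF assms, of g]
      T_diff[of f g] T_diff[of "E B f" "E B g"] in \<open>eventually_elim, simp add: algebra_simps\<close>)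

lemma E_compl: assumes "B \<in> sets M" shows "E (space M - B) (E B f) = 0"
proof -
  have B': "space M - B \<in> sets M" using assms by auto
  show ?thesis
  by (rule T_eqI) (use E_AE[OF assms, of f] E_AE[OF B', of "E B f"] T_zero AE_space in
       \<open>eventually_elim, auto split: split_indicator\<close>)
qed

lemma E_zero: assumes "B \<in> sets M" shows "E B 0 = 0"
  by (rule T_eqI) (use E_AE[OF assms, of 0] T_zero in \<open>eventually_elim, simp\<close>)

lemma E_split: assumes "B \<in> sets M" shows "E B f + E (space M - B) f = f"
proof -
  have B': "space M - B \<in> sets M" using assms by auto
  show ?thesis
  by (rule T_eqI) (use E_AE[OF assms, of f] E_AE[OF B', of f] T_add[of "E B f" "E (space M - B) f"] AE_space in
       \<open>eventually_elim, auto split: split_indicator\<close>)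
qed

lemma norm_split: assumes "B \<in> sets M" shows "norm f = norm (E B f) + norm (E (space M - B) f)"
proof -
  have B': "space M - B \<in> sets M" using assms by auto
  have "norm (E B f) + norm (E (space M - B) f) =
     (\<integral>x. \<bar>T f x\<bar> * indicator B x \<partial>M) + (\<integral>x. \<bar>T f x\<bar> * indicator (space M - B) x \<partial>M)"
    by (simp add: norm_E assms B')
  also have "\<dots> = (\<integral>x. \<bar>T f x\<bar> * indicator B x + \<bar>T f x\<bar> * indicator (space M - B) x \<partial>M)"
    by (rule Bochner_Integration.integral_add[symmetric]) (use assms B' int in \<open>auto intro!: integrable_real_mult_indicator\<close>)
  also have "\<dots> = (\<integral>x. \<bar>T f x\<bar> \<partial>M)"
    by (rule Bochner_Integration.integral_cong) (auto split: split_indicator)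
  finally show ?thesis using nrm by simp
qed

lemma abs_add_ident:
  fixes a b :: real
  shows "\<bar>a + b\<bar> = \<bar>a\<bar> + \<bar>b\<bar> - 2 * (\<bar>b\<bar> * (if a * b < 0 \<and> \<bar>b\<bar> \<le> \<bar>a\<bar> then 1 else 0))
     - 2 * (\<bar>a\<bar> * (if a * b < 0 \<and> \<bar>a\<bar> < \<bar>b\<bar> then 1 else 0))"
  by (cases "a \<ge> 0"; cases "b \<ge> 0") (auto simp: mult_less_0_iff)

lemma opp_le: fixes a b :: real shows "a * b < 0 \<Longrightarrow> \<bar>b\<bar> \<le> \<bar>a\<bar> \<Longrightarrow> \<bar>a + b\<bar> \<le> \<bar>a\<bar>"
  by (cases "a \<ge> 0"; cases "b \<ge> 0") (auto simp: mult_less_0_iff)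
lemma opp_eq: fixes a b :: real shows "a * b < 0 \<Longrightarrow> \<bar>a\<bar> < \<bar>b\<bar> \<Longrightarrow> \<bar>a + b\<bar> = \<bar>b\<bar> - \<bar>a\<bar>"
  by (cases "a \<ge> 0"; cases "b \<ge> 0") (auto simp: mult_less_0_iff)

lemma Lproj:
  fixes P :: "'e \<Rightarrow>\<^sub>L 'e"
  assumes idem: "\<And>f. P (P f) = P f"
    and HB: "\<And>g v. P g = 0 \<Longrightarrow> P v = v \<Longrightarrow> v \<noteq> 0 \<Longrightarrow> norm g < norm (g + v) \<and> norm v \<le> norm (g + v)"
  shows "norm f = norm (P f) + norm (f - P f)"
proof -
  have S1: "P (E B g) = 0" if B: "B \<in> sets M" and g: "P g = 0" for B g
  proof (rule ccontr)
    define w where "w = P (E B g)"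
    assume w0: "P (E B g) \<noteq> 0"
    have B': "space M - B \<in> sets M" using B by auto
    have sp: "E B g + E (space M - B) g = g" by (rule E_split[OF B])
    have Pw: "P w = w" by (simp add: w_def idem)
    have PB': "P (E (space M - B) g) = - w"
      using arg_cong[OF sp, of P] g by (simp add: blinfun.bilinear_simps w_def eq_neg_iff_add_eq_0 add.commute)
    have g1: "P (E B g - w) = 0" by (simp add: blinfun.bilinear_simps Pw w_def[symmetric])
    have g2: "P (E (space M - B) g + w) = 0" by (simp add: blinfun.bilinear_simps Pw PB')
    have wne: "w \<noteq> 0" using w0 by (simp add: w_def)
    have "norm (E B g - w) < norm (E B g - w + w)" using HB[OF g1 Pw wne] by blast
    moreover have "norm (E (space M - B) g + w) < norm (E (space M - B) g + w + - w)"
      using HB[OF g2, of "-w"] wne Pw by (simp add: blinfun.bilinear_simps)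
    ultimately have "norm (E B g - w) + norm (E (space M - B) g + w) < norm g"
      using norm_split[OF B, of g] by simp
    moreover have "norm g \<le> norm (E B g - w) + norm (E (space M - B) g + w)"
      using norm_triangle_ineq[of "E B g - w" "E (space M - B) g + w"] sp
      by (simp add: algebra_simps)
    ultimately show False by simp
  qed
  have S2: "E (space M - B) (P (E B h)) = 0" if B: "B \<in> sets M" for B h
  proof -
    define u where "u = P (E B h)"
    have B': "space M - B \<in> sets M" using B by auto
    define k where "k = E B h - u"
    have Pk: "P k = 0" by (simp add: k_def u_def blinfun.bilinear_simps idem)
    have "E (space M - B) u = E (space M - B) (E B h) - E (space M - B) k"
      by (simp add: k_def E_diff[OF B'])
    then have Eu: "E (space M - B) u = - E (space M - B) k" by (simp add: E_compl[OF B])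
    define g0 where "g0 = E (space M - B) k"
    have Pg0: "P g0 = 0" unfolding g0_def by (rule S1[OF B' Pk])
    have Pu: "P u = u" by (simp add: u_def idem)
    have g0u: "g0 + u = E B u" using E_split[OF B, of u] Eu by (simp add: g0_def algebra_simps)
    show ?thesis
    proof (cases "u = 0")
      case True then show ?thesis by (simp add: u_def[symmetric] E_zero[OF B'])
    next
      case False
      have "norm u \<le> norm (E B u)" using HB[OF Pg0 Pu False] g0u by simp
      then have "norm (E (space M - B) u) \<le> 0" using norm_split[OF B, of u] by simp
      then show ?thesis by (simp add: u_def)
    qed
  qed
  have S3: "P (E B v) = E B v" if B: "B \<in> sets M" and v: "P v = v" for B v
  proof -
    have B': "space M - B \<in> sets M" using B by auto
    have BB: "space M - (space M - B) = B" using sets.sets_into_space[OF B] by auto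
    define u where "u = P (E B v)"
    define u' where "u' = P (E (space M - B) v)"
    have uu: "u + u' = v" using arg_cong[OF E_split[OF B, of v], of P] v
      by (simp add: u_def u'_def blinfun.bilinear_simps)
    have "E B u' = 0" using S2[OF B', of v] by (simp add: BB u'_def)
    moreover have "E B u = u" using E_split[OF B, of u] S2[OF B, of v] by (simp add: u_def)
    ultimately have "E B v = u" using uu E_add[OF B, of u u'] by simp
    then show ?thesis by (simp add: u_def)
  qed
  have S4: "norm (g + v) = norm g + norm v" if g: "P g = 0" and v: "P v = v" for g v
  proof -
    define C where "C = {x\<in>space M. T g x * T v x < 0 \<and> \<bar>T v x\<bar> \<le> \<bar>T g x\<bar>}"
    define D where "D = {x\<in>space M. T g x * T v x < 0 \<and> \<bar>T g x\<bar> < \<bar>T v x\<bar>}"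
    have C[measurable]: "C \<in> sets M" unfolding C_def by measurable
    have D[measurable]: "D \<in> sets M" unfolding D_def by measurable
    have iC: "integrable M (\<lambda>x. \<bar>T h x\<bar> * indicator C x)" for h
      by (rule integrable_real_mult_indicator[OF C]) (simp add: int)
    have iD: "integrable M (\<lambda>x. \<bar>T h x\<bar> * indicator D x)" for h
      by (rule integrable_real_mult_indicator[OF D]) (simp add: int)
    have normsum: "norm (E S g + E S v) = (\<integral>x. \<bar>T g x + T v x\<bar> * indicator S x \<partial>M)"
      if S: "S \<in> sets M" for S
    proof -
      have "AE x in M. T (E S g + E S v) x = (T g x + T v x) * indicator S x"
        using T_add[of "E S g" "E S v"] E_AE[OF S, of g] E_AE[OF S, of v]
        by eventually_elim (simp add: algebra_simps)
      then have "norm (E S g + E S v) = (\<integral>x. \<bar>(T g x + T v x) * indicator S x\<bar> \<partial>M)"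
        by (rule normT) (use S in measurable)
      also have "\<dots> = (\<integral>x. \<bar>T g x + T v x\<bar> * indicator S x \<partial>M)"
        by (rule Bochner_Integration.integral_cong) (auto split: split_indicator)
      finally show ?thesis .
    qed
    have Ca: "(\<integral>x. \<bar>T v x\<bar> * indicator C x \<partial>M) = 0"
    proof (cases "E C v = 0")
      case True then show ?thesis using norm_E[OF C, of v] by simp
    next
      case False
      have "norm (E C g) < norm (E C g + E C v)"
        using HB[OF S1[OF C g] S3[OF C v] False] by simp
      moreover have "norm (E C g + E C v) \<le> norm (E C g)"
        unfolding normsum[OF C] norm_E[OF C]
        by (rule integral_mono) (auto simp: C_def opp_le split: split_indicator intro!: iC
             integrable_real_mult_indicator int)
      ultimately show ?thesis by simp
    qed
    have Db: "(\<integral>x. \<bar>T g x\<bar> * indicator D x \<partial>M) = 0"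
    proof -
      have le: "(\<integral>x. \<bar>T g x\<bar> * indicator D x \<partial>M) \<le> 0"
      proof (cases "E D v = 0")
        case True
        then have "(\<integral>x. \<bar>T v x\<bar> * indicator D x \<partial>M) = 0" using norm_E[OF D, of v] by simp
        moreover have "(\<integral>x. \<bar>T g x\<bar> * indicator D x \<partial>M) \<le> (\<integral>x. \<bar>T v x\<bar> * indicator D x \<partial>M)"
          by (rule integral_mono[OF iD iD]) (auto simp: D_def split: split_indicator)
        ultimately show ?thesis by simp
      next
        case False
        have "norm (E D v) \<le> norm (E D g + E D v)"
          using HB[OF S1[OF D g] S3[OF D v] False] by simp
        moreover have "norm (E D g + E D v) = (\<integral>x. \<bar>T v x\<bar> * indicator D x - \<bar>T g x\<bar> * indicator D x \<partial>M)"
          unfolding normsum[OF D]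
          by (rule Bochner_Integration.integral_cong) (auto simp: D_def opp_eq split: split_indicator)
        moreover have "(\<integral>x. \<bar>T v x\<bar> * indicator D x - \<bar>T g x\<bar> * indicator D x \<partial>M) =
             (\<integral>x. \<bar>T v x\<bar> * indicator D x \<partial>M) - (\<integral>x. \<bar>T g x\<bar> * indicator D x \<partial>M)"
          by (rule Bochner_Integration.integral_diff[OF iD iD])
        ultimately show ?thesis using norm_E[OF D, of v] by simp
      qed
      have "0 \<le> (\<integral>x. \<bar>T g x\<bar> * indicator D x \<partial>M)"
        by (rule integral_nonneg_AE) auto
      with le show ?thesis by simp
    qed
    have "AE x in M. T (g + v) x = T g x + T v x" by (rule T_add)
    then have "norm (g + v) = (\<integral>x. \<bar>T g x + T v x\<bar> \<partial>M)" by (rule normT) measurable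
    also have "\<dots> = (\<integral>x. \<bar>T g x\<bar> + \<bar>T v x\<bar> - 2 * (\<bar>T v x\<bar> * indicator C x) - 2 * (\<bar>T g x\<bar> * indicator D x) \<partial>M)"
      by (rule Bochner_Integration.integral_cong)
        (auto simp: C_def D_def indicator_def abs_add_ident[of "T g _" "T v _"])
    also have "\<dots> = (\<integral>x. \<bar>T g x\<bar> \<partial>M) + (\<integral>x. \<bar>T v x\<bar> \<partial>M)
        - 2 * (\<integral>x. \<bar>T v x\<bar> * indicator C x \<partial>M) - 2 * (\<integral>x. \<bar>T g x\<bar> * indicator D x \<partial>M)"
      using iC[of v] iD[of g] int[of g] int[of v] by simp
    also have "\<dots> = norm g + norm v" using Ca Db nrm by simp
    finally show ?thesis .
  qed
  have "norm (f - P f + P f) = norm (f - P f) + norm (P f)"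
    by (rule S4) (simp_all add: blinfun.bilinear_simps idem)
  then show ?thesis by simp
qed

end


lemma ann_span: assumes "v \<in> annihilator Y" "x \<in> span Y" shows "blinfun_apply v x = 0"
proof -
  have "linear (blinfun_apply v)" using blinfun.bounded_linear_right bounded_linear.linear by blast
  then show ?thesis using assms by (intro linear_eq_0_on_span[of "blinfun_apply v" Y x]) (auto simp: ann_iff)
qed

lemma FC:
  fixes F :: "'a::real_normed_vector set"
  assumes "finite F"
  shows "span (Y \<union> F) = UNIV \<Longrightarrow> \<exists>x. \<forall>v\<in>annihilator Y. blinfun_apply v x = blinfun_apply z v"
  using assms
proof (induction F arbitrary: Y rule: finite_induct)
  case empty
  have "v = 0" if "v \<in> annihilator Y" for v
    by (rule blinfun_eqI) (use ann_span[OF that] empty in auto)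
  then show ?case by (intro exI[of _ 0]) (metis blinfun.zero_right)
next
  case (insert f F Y)
  have "span (insert f Y \<union> F) = UNIV" using insert.prems by (simp add: insert_commute)
  from insert.IH[OF this] obtain x' where x': "\<forall>v\<in>annihilator (insert f Y). blinfun_apply v x' = blinfun_apply z v"
    by blast
  show ?case
  proof (cases "\<forall>v\<in>annihilator Y. blinfun_apply v f = 0")
    case True
    then have "annihilator Y \<subseteq> annihilator (insert f Y)" by (auto simp: ann_iff)
    then show ?thesis using x' by blast
  next
    case False
    then obtain v0 where v0: "v0 \<in> annihilator Y" "blinfun_apply v0 f \<noteq> 0" by blast
    define v1 where "v1 = v0 /\<^sub>R blinfun_apply v0 f"
    have v1: "v1 \<in> annihilator Y" "blinfun_apply v1 f = 1"
      using v0 by (auto simp: v1_def ann_iff blinfun.bilinear_simps)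
    define x where "x = x' + (blinfun_apply z v1 - blinfun_apply v1 x') *\<^sub>R f"
    show ?thesis
    proof (intro exI[of _ x] ballI)
      fix v assume v: "v \<in> annihilator Y"
      have "v - blinfun_apply v f *\<^sub>R v1 \<in> annihilator (insert f Y)"
        using v v1 by (auto simp: ann_iff blinfun.bilinear_simps)
      then have "blinfun_apply (v - blinfun_apply v f *\<^sub>R v1) x' = blinfun_apply z (v - blinfun_apply v f *\<^sub>R v1)"
        using x' by blast
      then show "blinfun_apply v x = blinfun_apply z v"
        by (simp add: x_def blinfun.bilinear_simps algebra_simps)
    qed
  qed
qed

lemma ce_add: "canonical_embedding (a + b) = canonical_embedding a + canonical_embedding b"
  by (rule blinfun_eqI) (simp add: blinfun.bilinear_simps)
lemma ce_diff: "canonical_embedding (a - b) = canonical_embedding a - canonical_embedding b"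
  by (rule blinfun_eqI) (simp add: blinfun.bilinear_simps)

lemma HB_bidual_M:
  fixes Y :: "'a::real_normed_vector set" and P :: "('a \<Rightarrow>\<^sub>L real) \<Rightarrow>\<^sub>L ('a \<Rightarrow>\<^sub>L real)"
  assumes Memb: "M_embedded TYPE('a)"
    and idem: "\<And>f. P (P f) = P f" and rng: "range (blinfun_apply P) = annihilator Y"
    and nP: "norm P = 1"
    and HBY: "\<forall>g\<in>range (\<lambda>f. f - P f). \<forall>v\<in>annihilator Y. v \<noteq> 0 \<longrightarrow>
            norm (g + v) > norm g \<and> norm (g + v) \<ge> norm v"
    and FCY: "\<And>z. \<exists>x. \<forall>v\<in>annihilator Y. blinfun_apply v x = blinfun_apply z v"
  shows "property_HB (biannihilator Y)"
proof -
  define CEX where "CEX = Blinfun (canonical_embedding :: 'a \<Rightarrow> _)"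
  have CEX: "blinfun_apply CEX = canonical_embedding" unfolding CEX_def by (rule bounded_linear_Blinfun_apply[OF bl_ce])
  have nCEX: "norm CEX \<le> 1" by (rule norm_blinfun_bound) (simp_all add: CEX norm_ce_le)
  define Rop where "Rop = Blinfun (\<lambda>\<Phi>::(('a\<Rightarrow>\<^sub>L real)\<Rightarrow>\<^sub>L real)\<Rightarrow>\<^sub>L real. \<Phi> o\<^sub>L CEX)"
  have Rap: "blinfun_apply (blinfun_apply Rop \<Phi>) x = blinfun_apply \<Phi> (canonical_embedding x)" for \<Phi> x
    unfolding Rop_def by (simp add: bounded_linear_Blinfun_apply[OF bl_compl] CEX)
  have nR: "norm (Rop \<Phi>) \<le> norm \<Phi>" for \<Phi>
  proof -
    have "norm (Rop \<Phi>) = norm (\<Phi> o\<^sub>L CEX)" unfolding Rop_def by (simp add: bounded_linear_Blinfun_apply[OF bl_compl])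
    also have "\<dots> \<le> norm \<Phi> * norm CEX" by (rule norm_blinfun_compose)
    also have "\<dots> \<le> norm \<Phi>" using nCEX by (simp add: mult_left_le)
    finally show ?thesis .
  qed
  let ?J = "canonical_embedding :: ('a \<Rightarrow>\<^sub>L real) \<Rightarrow> _"
  have RJ: "Rop (?J \<phi>) = \<phi>" for \<phi> by (rule blinfun_eqI) (simp add: Rap)
  have Rdiff: "Rop (a - b) = Rop a - Rop b" "Rop (a + b) = Rop a + Rop b" for a b
    by (simp_all add: blinfun.bilinear_simps)
  let ?XP = "annihilator (range (canonical_embedding :: 'a \<Rightarrow> _))"
  have XPi: "u \<in> ?XP \<longleftrightarrow> Rop u = 0" for u
  proof
    assume "u \<in> ?XP" then show "Rop u = 0" by (intro blinfun_eqI) (simp add: Rap ann_iff)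
  next
    assume R0: "Rop u = 0"
    show "u \<in> ?XP"
    proof (unfold ann_iff, intro ballI)
      fix y assume "y \<in> range (canonical_embedding :: 'a \<Rightarrow> _)"
      then obtain x where "y = canonical_embedding x" by blast
      then show "blinfun_apply u y = 0" using Rap[of u x] R0 by simp
    qed
  qed
  obtain W where W0: "subspace W" "closed W" "?XP \<inter> W = {0}" "\<forall>e. \<exists>u\<in>?XP. \<exists>w\<in>W. e = u + w"
    "\<forall>u\<in>?XP. \<forall>w\<in>W. norm (u + w) = norm u + norm w"
    using Memb unfolding M_embedded_def M_ideal_def by (elim conjE exE) (rule that)
  have W: "subspace W" "?XP \<inter> W = {0}" "\<And>e. \<exists>u\<in>?XP. \<exists>w\<in>W. e = u + w"
    "\<And>u w. u \<in> ?XP \<Longrightarrow> w \<in> W \<Longrightarrow> norm (u + w) = norm u + norm w"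
    using W0 by auto
  have M1: "w = ?J (Rop w)" if w: "w \<in> W" for w
  proof -
    define \<phi> where "\<phi> = Rop w"
    obtain u' w' where u': "u' \<in> ?XP" and w': "w' \<in> W" and d: "?J \<phi> = u' + w'" using W(3) by blast
    have "Rop w' = \<phi>" using arg_cong[OF d, of Rop] XPi u' by (simp add: RJ blinfun.bilinear_simps)
    then have "norm \<phi> \<le> norm w'" using nR[of w'] by simp
    moreover have "norm (?J \<phi>) = norm u' + norm w'" using d W(4)[OF u' w'] by simp
    ultimately have "norm u' \<le> 0" by (simp add: norm_ce_dual)
    then have "?J \<phi> = w'" using d by simp
    then have "w - ?J \<phi> \<in> W" using w w' W(1) by (simp add: subspace_diff)
    moreover have "w - ?J \<phi> \<in> ?XP" unfolding XPi by (simp add: Rdiff RJ \<phi>_def)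
    ultimately have "w - ?J \<phi> = 0" using W(2) by blast
    then show ?thesis by (simp add: \<phi>_def)
  qed
  have M2: "norm \<Phi> = norm (\<Phi> - ?J (Rop \<Phi>)) + norm (Rop \<Phi>)" for \<Phi>
  proof -
    obtain u w where u: "u \<in> ?XP" and w: "w \<in> W" and d: "\<Phi> = u + w" using W(3) by blast
    have Ru: "Rop u = 0" using u XPi by blast
    have "Rop \<Phi> = Rop w" by (simp add: d Rdiff Ru)
    then have "?J (Rop \<Phi>) = w" using M1[OF w] by (simp only:)
    then have "norm w = norm (Rop \<Phi>)" using norm_ce_dual[of "Rop \<Phi>"] by (simp only:)
    then show ?thesis using W(4)[OF u w] d \<open>?J (Rop \<Phi>) = w\<close> by simp
  qed
  let ?Z = "biannihilator Y"
  have PinY: "P f \<in> annihilator Y" for f using rng by auto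
  have fixY: "v \<in> annihilator Y \<Longrightarrow> P v = v" for v using rng idem by (metis imageE)
  have Zi: "z \<in> ?Z \<longleftrightarrow> (\<forall>v\<in>annihilator Y. blinfun_apply z v = 0)" for z
    by (simp add: biannihilator_def ann_iff)
  have JZ: "?J p \<in> annihilator ?Z" if "p \<in> annihilator Y" for p
    using that by (simp add: ann_iff Zi)
  have ZJ: "\<Phi> = ?J (Rop \<Phi>) \<and> Rop \<Phi> \<in> annihilator Y" if \<Phi>: "\<Phi> \<in> annihilator ?Z" for \<Phi>
  proof
    show RY: "Rop \<Phi> \<in> annihilator Y"
    proof (unfold ann_iff, intro ballI)
      fix y assume "y \<in> Y"
      then have "canonical_embedding y \<in> ?Z" by (simp add: Zi ann_iff)
      then show "blinfun_apply (Rop \<Phi>) y = 0" using \<Phi> by (simp add: Rap ann_iff)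
    qed
    show "\<Phi> = ?J (Rop \<Phi>)"
    proof (rule blinfun_eqI)
      fix z
      obtain x where x: "\<forall>v\<in>annihilator Y. blinfun_apply v x = blinfun_apply z v" using FCY by blast
      have "z - canonical_embedding x \<in> ?Z" using x by (simp add: Zi blinfun.bilinear_simps)
      then have "blinfun_apply \<Phi> (z - canonical_embedding x) = 0"
        using \<Phi> by (simp add: ann_iff)
      then have "blinfun_apply \<Phi> z = blinfun_apply \<Phi> (canonical_embedding x)"
        by (simp add: blinfun.diff_right)
      also have "\<dots> = blinfun_apply (Rop \<Phi>) x" by (simp add: Rap)
      also have "\<dots> = blinfun_apply z (Rop \<Phi>)" using x RY by blast
      also have "\<dots> = blinfun_apply (?J (Rop \<Phi>)) z" by simp
      finally show "blinfun_apply \<Phi> z = blinfun_apply (?J (Rop \<Phi>)) z" .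
    qed
  qed
  define Q where "Q = Blinfun (\<lambda>\<Phi>. ?J (P (Rop \<Phi>)))"
  have blQ: "bounded_linear (\<lambda>\<Phi>. ?J (P (Rop \<Phi>)))"
    by (intro bounded_linear_compose[OF bl_ce] bounded_linear_compose[OF blinfun.bounded_linear_right]
        blinfun.bounded_linear_right)
  have Qap: "Q \<Phi> = ?J (P (Rop \<Phi>))" for \<Phi> unfolding Q_def by (simp add: bounded_linear_Blinfun_apply[OF blQ])
  have Qidem: "Q (Q \<Phi>) = Q \<Phi>" for \<Phi> by (simp add: Qap RJ idem)
  have rngQ: "range (blinfun_apply Q) = annihilator ?Z"
  proof (intro set_eqI iffI)
    fix \<Psi> assume "\<Psi> \<in> range (blinfun_apply Q)"
    then show "\<Psi> \<in> annihilator ?Z" using JZ[OF PinY] by (auto simp: Qap)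
  next
    fix \<Phi> assume \<Phi>: "\<Phi> \<in> annihilator ?Z"
    have "Q \<Phi> = ?J (P (Rop \<Phi>))" by (rule Qap)
    also have "P (Rop \<Phi>) = Rop \<Phi>" using ZJ[OF \<Phi>] fixY by blast
    finally have "Q \<Phi> = \<Phi>" using ZJ[OF \<Phi>] by simp
    then show "\<Phi> \<in> range (blinfun_apply Q)" by (metis rangeI)
  qed
  have fixQ: "w \<in> annihilator ?Z \<Longrightarrow> Q w = w" for w
    using rngQ Qidem by (metis imageE)
  have nQle: "norm Q \<le> 1"
  proof (rule norm_blinfun_bound)
    fix \<Phi> :: "(('a\<Rightarrow>\<^sub>L real)\<Rightarrow>\<^sub>L real)\<Rightarrow>\<^sub>L real"
    have "norm (Q \<Phi>) = norm (P (Rop \<Phi>))" by (simp add: Qap norm_ce_dual)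
    also have "\<dots> \<le> norm P * norm (Rop \<Phi>)" by (rule norm_blinfun)
    also have "\<dots> \<le> 1 * norm \<Phi>" using nR[of \<Phi>] nP by simp
    finally show "norm (Q \<Phi>) \<le> 1 * norm \<Phi>" .
  qed simp
  obtain f where pf: "P f \<noteq> 0"
  proof -
    have "P \<noteq> 0" using nP by auto
    then show ?thesis using that by (metis blinfun_eqI blinfun.zero_left)
  qed
  define \<Phi>0 where "\<Phi>0 = ?J (P f)"
  have \<Phi>0Z: "\<Phi>0 \<in> annihilator ?Z" unfolding \<Phi>0_def by (rule JZ[OF PinY])
  have \<Phi>0nz: "norm \<Phi>0 > 0" using pf by (simp add: \<Phi>0_def norm_ce_dual)
  have "norm \<Phi>0 \<le> norm Q * norm \<Phi>0"
    using norm_blinfun[of Q \<Phi>0] fixQ[OF \<Phi>0Z] by simp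
  then have nQ: "norm Q = 1" using nQle \<Phi>0nz by (metis antisym mult_le_cancel_right1 not_le)
  show ?thesis
    unfolding property_HB_def
  proof (intro conjI exI[of _ Q])
    show "subspace ?Z" "closed ?Z" unfolding biannihilator_def by (rule subspace_ann closed_ann)+
    show "\<forall>\<Phi>. Q (Q \<Phi>) = Q \<Phi>" using Qidem by blast
    show "range (blinfun_apply Q) = annihilator ?Z" by (rule rngQ)
    show "norm Q = 1" by (rule nQ)
    show "\<forall>g\<in>range (\<lambda>f. f - Q f). \<forall>v\<in>annihilator ?Z. v \<noteq> 0 \<longrightarrow>
            norm (g + v) > norm g \<and> norm (g + v) \<ge> norm v"
    proof (intro ballI impI)
      fix g w assume g: "g \<in> range (\<lambda>f. f - Q f)" and w: "w \<in> annihilator ?Z" and w0: "w \<noteq> 0"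
      obtain \<Psi> where g\<Psi>: "g = \<Psi> - Q \<Psi>" using g by auto
      have PRg: "P (Rop g) = 0" by (simp add: g\<Psi> Qap Rdiff RJ idem blinfun.bilinear_simps)
      define v0 where "v0 = Rop w"
      have wJ: "w = ?J v0" and v0Y: "v0 \<in> annihilator Y" using ZJ[OF w] by (simp_all add: v0_def)
      have v0nz: "v0 \<noteq> 0"
      proof
        assume "v0 = 0"
        then have "w = ?J 0" using wJ by simp
        also have "?J 0 = 0" by (rule blinfun_eqI) simp
        finally show False using w0 by simp
      qed
      have Rg: "Rop g \<in> range (\<lambda>f. f - P f)" by (rule image_eqI[where x="Rop g"]) (simp_all add: PRg)
      have hb: "norm (Rop g + v0) > norm (Rop g)" "norm (Rop g + v0) \<ge> norm v0"
        using HBY Rg v0Y v0nz by blast+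
      have e1: "norm (g + w) = norm (g - ?J (Rop g)) + norm (Rop g + v0)"
        using M2[of "g + w"] by (simp add: Rdiff wJ RJ ce_add)
      have e2: "norm g = norm (g - ?J (Rop g)) + norm (Rop g)" by (rule M2)
      have nw: "norm w = norm v0" by (simp add: wJ norm_ce_dual)
      have "norm (g + w) > norm g" using e1 e2 hb by linarith
      moreover have "norm (g + w) \<ge> norm w" using e1 nw hb norm_ge_zero[of "g - ?J (Rop g)"] by linarith
      ultimately show "norm (g + w) > norm g \<and> norm (g + w) \<ge> norm w" by blast
    qed
  qed
qed


theorem theorem3p12:
  fixes Y :: "'a::banach set" and M :: "'m measure"
  assumes "L1_isometric M TYPE('a) \<or> M_embedded TYPE('a)"
    and "subspace Y" and "closed Y"
    and "\<exists>F. finite F \<and> span (Y \<union> F) = UNIV"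
    and "property_HB Y"
  shows "property_HB (biannihilator Y)"
proof -
  obtain P :: "('a \<Rightarrow>\<^sub>L real) \<Rightarrow>\<^sub>L ('a \<Rightarrow>\<^sub>L real)" where
    idem: "\<forall>f. P (P f) = P f" and rng: "range (blinfun_apply P) = annihilator Y" and nP: "norm P = 1"
    and HB: "\<forall>g\<in>range (\<lambda>f. f - P f). \<forall>v\<in>annihilator Y. v \<noteq> 0 \<longrightarrow>
            norm (g + v) > norm g \<and> norm (g + v) \<ge> norm v"
    using assms(5) unfolding property_HB_def by (elim conjE exE) (rule that)
  show ?thesis
  proof (cases "L1_isometric M TYPE('a)")
    case True
    then obtain T :: "('a \<Rightarrow>\<^sub>L real) \<Rightarrow> 'm \<Rightarrow> real" where
      T1: "\<forall>f. integrable M (T f)" and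
      T2: "\<forall>f g a b. AE x in M. T (a *\<^sub>R f + b *\<^sub>R g) x = a * T f x + b * T g x" and
      T3: "\<forall>f. (\<integral>x. \<bar>T f x\<bar> \<partial>M) = norm f" and
      T4: "\<forall>h. integrable M h \<longrightarrow> (\<exists>f. AE x in M. T f x = h x)"
      unfolding L1_isometric_def by (elim conjE exE) (rule that)
    interpret L: L1rep M T
      by unfold_locales (use T1 T2 T3 T4 in blast)+
    have HB': "norm g < norm (g + v) \<and> norm v \<le> norm (g + v)"
      if "P g = 0" "P v = v" "v \<noteq> 0" for g v
    proof -
      have "g \<in> range (\<lambda>f. f - P f)" by (rule image_eqI[where x=g]) (simp_all add: that)
      moreover have "v \<in> annihilator Y" using rng that(2) by (metis rangeI)
      ultimately show ?thesis using HB that(3) by blast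
    qed
    have Lp: "norm f = norm (P f) + norm (f - P f)" for f
      by (rule L.Lproj) (use idem HB' in auto)
    show ?thesis by (rule HB_bidual_L[OF _ rng nP Lp]) (use idem in blast)
  next
    case False
    then have Memb: "M_embedded TYPE('a)" using assms(1) by blast
    obtain F :: "'a set" where F: "finite F" "span (Y \<union> F) = UNIV" using assms(4) by blast
    have FCY: "\<exists>x. \<forall>v\<in>annihilator Y. blinfun_apply v x = blinfun_apply z v" for z
      by (rule FC[OF F(1) F(2)])
    show ?thesis by (rule HB_bidual_M[OF Memb _ rng nP HB FCY]) (use idem in blast)
  qed
qed

end
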